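(* For all integers $n\ge 3$ and $1<k<n$, the girth of $G=H_B(n,k)$ is $4$.
   Context: Fix integers $n\ge 2$ and $1\le k<n$ and positive real numbers $x_1<x_2<\dots<x_n$. Let $\mathscr{B}_n=\{\pm x_1,\pm x_2,\dots,\pm x_{n-1},x_n\}$ (so $-x_n\notin\mathscr{B}_n$). Let $\phi(\mathscr{B}_n)$ be the family of all nonempty subsets $S\subseteq\mathscr{B}_n$ whose elements have pairwise distinct absolute values and whose element of largest absolute value is positive. Let $\mathscr{B}_n^+=\{x_1,\dots,x_n\}$, let $V_1$ be the set of all $k$-element subsets of $\mathscr{B}_n^+$, and let $V_2=\phi(\mathscr{B}_n)\setminus V_1$. For $A\in\phi(\mathscr{B}_n)$ put $A^\dagger=\{|a|:a\in A\}$. The bipartite Kneser B type-$k$ graph $H_B(n,k)$ is the simple graph with vertex set $V_1\cup V_2$ in which $X\in V_1$ and $Y\in V_2$ are adjacent if and only if $X\subseteq Y^\dagger$ or $Y^\dagger\subseteq X$, and there are no other edges. The girth is the length of a shortest cycle. *)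

theory Defs
  imports Main "HOL-Library.Extended_Nat"
begin

text \<open>The girth is
the infimum (in enat) of the cycle lengths (infinity if acyclic).\<close>

definition is_cycle :: "'a set \<Rightarrow> ('a \<Rightarrow> 'a \<Rightarrow> bool) \<Rightarrow> 'a list \<Rightarrow> bool" where
  "is_cycle V E vs \<longleftrightarrow> length vs \<ge> 3 \<and> distinct vs \<and> set vs \<subseteq> V \<and>
     (\<forall>i < length vs. E (vs ! i) (vs ! ((i + 1) mod length vs)))"

definition girth :: "'a set \<Rightarrow> ('a \<Rightarrow> 'a \<Rightarrow> bool) \<Rightarrow> enat" where
  "girth V E = (INF vs \<in> {vs. is_cycle V E vs}. enat (length vs))"

definition Bn :: "nat \<Rightarrow> (nat \<Rightarrow> real) \<Rightarrow> real set" where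
  "Bn n x = {x i | i. 1 \<le> i \<and> i \<le> n} \<union> {- x i | i. 1 \<le> i \<and> i \<le> n - 1}"

definition Bn_plus :: "nat \<Rightarrow> (nat \<Rightarrow> real) \<Rightarrow> real set" where
  "Bn_plus n x = {x i | i. 1 \<le> i \<and> i \<le> n}"

definition phi :: "real set \<Rightarrow> real set set" where
  "phi B = {S. S \<noteq> {} \<and> S \<subseteq> B \<and> inj_on abs S \<and>
               (\<forall>a \<in> S. \<bar>a\<bar> = Max (abs ` S) \<longrightarrow> a > 0)}"

definition HB_V1 :: "nat \<Rightarrow> nat \<Rightarrow> (nat \<Rightarrow> real) \<Rightarrow> real set set" where
  "HB_V1 n k x = {X. X \<subseteq> Bn_plus n x \<and> card X = k}"

definition HB_V2 :: "nat \<Rightarrow> nat \<Rightarrow> (nat \<Rightarrow> real) \<Rightarrow> real set set" where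
  "HB_V2 n k x = phi (Bn n x) - HB_V1 n k x"

definition HB_vertices :: "nat \<Rightarrow> nat \<Rightarrow> (nat \<Rightarrow> real) \<Rightarrow> real set set" where
  "HB_vertices n k x = HB_V1 n k x \<union> HB_V2 n k x"

definition HB_adj :: "nat \<Rightarrow> nat \<Rightarrow> (nat \<Rightarrow> real) \<Rightarrow> real set \<Rightarrow> real set \<Rightarrow> bool" where
  "HB_adj n k x X Y \<longleftrightarrow>
     (X \<in> HB_V1 n k x \<and> Y \<in> HB_V2 n k x \<and> (X \<subseteq> abs ` Y \<or> abs ` Y \<subseteq> X)) \<or>
     (Y \<in> HB_V1 n k x \<and> X \<in> HB_V2 n k x \<and> (Y \<subseteq> abs ` X \<or> abs ` X \<subseteq> Y))"

end

theory Submission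
  imports Defs
begin

lemma adj_parity:
  assumes "HB_adj n k x X Y"
  shows "(X \<in> HB_V1 n k x) \<noteq> (Y \<in> HB_V1 n k x)"
  using assms unfolding HB_adj_def HB_V2_def by auto

lemma no_len3:
  assumes "is_cycle V (HB_adj n k x) vs"
  shows "length vs \<noteq> 3"
proof
  assume l: "length vs = 3"
  from assms have e: "\<forall>i<3. HB_adj n k x (vs ! i) (vs ! ((i + 1) mod 3))"
    unfolding is_cycle_def l by simp
  have a: "HB_adj n k x (vs!0) (vs!1)" using e[rule_format, of 0] by simp
  have b: "HB_adj n k x (vs!1) (vs!2)" using e[rule_format, of 1] by (simp add: numeral_2_eq_2)
  have c: "HB_adj n k x (vs!2) (vs!0)" using e[rule_format, of 2] by (simp add: numeral_2_eq_2)
  show False using adj_parity[OF a] adj_parity[OF b] adj_parity[OF c] by blast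
qed

lemma in_phi:
  assumes "S \<subseteq> Bn_plus n x" "S \<noteq> {}" "\<forall>a\<in>S. a > 0"
  shows "S \<in> phi (Bn n x)"
proof -
  have "Bn_plus n x \<subseteq> Bn n x" unfolding Bn_plus_def Bn_def by auto
  moreover have "inj_on abs S" using assms(3) unfolding inj_on_def by (metis abs_of_pos)
  ultimately show ?thesis using assms unfolding phi_def by auto
qed

theorem mainTheorem8:
  fixes n k :: nat and x :: "nat \<Rightarrow> real"
  assumes "n \<ge> 3" and "1 < k" and "k < n"
    and "\<forall>i. 1 \<le> i \<and> i \<le> n \<longrightarrow> 0 < x i"
    and "strict_mono_on {1..n} x"
  shows "girth (HB_vertices n k x) (HB_adj n k x) = 4"
proof -
  have inj: "inj_on x {1..n}" using assms(5) strict_mono_on_imp_inj_on by blast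
  define X1 where "X1 = x ` {1..k}"
  define X2 where "X2 = x ` {2..k+1}"
  define Y1 where "Y1 = x ` {1..k+1}"
  define Y2 where "Y2 = x ` {2..k}"
  have card: "\<And>a b :: nat. 1 \<le> a \<Longrightarrow> b \<le> n \<Longrightarrow> card (x ` {a..b}) = card {a..b}"
    by (rule card_image, rule inj_on_subset[OF inj]) auto
  have sub: "\<And>a b :: nat. 1 \<le> a \<Longrightarrow> b \<le> n \<Longrightarrow> x ` {a..b} \<subseteq> Bn_plus n x"
    unfolding Bn_plus_def by auto
  have pos: "\<And>a b :: nat. 1 \<le> a \<Longrightarrow> b \<le> n \<Longrightarrow> \<forall>v \<in> x ` {a..b}. v > 0"
    using assms(4) by auto
  have absid: "\<And>a b :: nat. 1 \<le> a \<Longrightarrow> b \<le> n \<Longrightarrow> abs ` (x ` {a..b}) = x ` {a..b}"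
  proof -
    fix a b :: nat assume "1 \<le> a" "b \<le> n"
    hence "\<forall>v \<in> x ` {a..b}. abs v = v" using pos by force
    thus "abs ` (x ` {a..b}) = x ` {a..b}" by (simp add: image_image)
  qed
  have cX1: "card X1 = k" unfolding X1_def using card[of 1 k] assms by simp
  have cX2: "card X2 = k" unfolding X2_def using card[of 2 "k+1"] assms by simp
  have cY1: "card Y1 = k+1" unfolding Y1_def using card[of 1 "k+1"] assms by simp
  have cY2: "card Y2 = k-1" unfolding Y2_def using card[of 2 k] assms by simp
  have V1X1: "X1 \<in> HB_V1 n k x" unfolding HB_V1_def X1_def
    using sub[of 1 k] cX1 assms unfolding X1_def by simp
  have V1X2: "X2 \<in> HB_V1 n k x" unfolding HB_V1_def X2_def
    using sub[of 2 "k+1"] cX2 assms unfolding X2_def by simp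
  have pY1: "Y1 \<in> phi (Bn n x)" unfolding Y1_def
    by (rule in_phi) (use sub[of 1 "k+1"] pos[of 1 "k+1"] assms in auto)
  have pY2: "Y2 \<in> phi (Bn n x)" unfolding Y2_def
    by (rule in_phi) (use sub[of 2 k] pos[of 2 k] assms in auto)
  have V2Y1: "Y1 \<in> HB_V2 n k x" unfolding HB_V2_def HB_V1_def
    using pY1 cY1 by simp
  have V2Y2: "Y2 \<in> HB_V2 n k x"
  proof -
    have "k - 1 \<noteq> k" using assms(2) by simp
    thus ?thesis using pY2 cY2 unfolding HB_V2_def HB_V1_def by simp
  qed
  have aY1: "abs ` Y1 = Y1" unfolding Y1_def using absid[of 1 "k+1"] assms by simp
  have aY2: "abs ` Y2 = Y2" unfolding Y2_def using absid[of 2 k] assms by simp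
  have s1: "X1 \<subseteq> Y1" "X2 \<subseteq> Y1" "Y2 \<subseteq> X1" "Y2 \<subseteq> X2"
    unfolding X1_def X2_def Y1_def Y2_def by auto
  have ne: "X1 \<noteq> X2"
  proof
    assume "X1 = X2"
    moreover have "x 1 \<in> X1" unfolding X1_def using assms by simp
    ultimately have "x 1 \<in> X2" by simp
    then obtain j where "j \<in> {2..k+1}" "x 1 = x j" unfolding X2_def by auto
    with inj assms have "1 = j" by (intro inj_onD[OF inj]) auto
    with \<open>j \<in> {2..k+1}\<close> show False by simp
  qed
  define vs where "vs = [X1, Y1, X2, Y2]"
  have cyc: "is_cycle (HB_vertices n k x) (HB_adj n k x) vs"
  proof -
    have n1: "X1 \<noteq> Y1" "X2 \<noteq> Y1" using cX1 cX2 cY1 by (intro notI, simp)+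
    have n2: "X1 \<noteq> Y2" "X2 \<noteq> Y2" "Y1 \<noteq> Y2" using cX1 cX2 cY1 cY2 assms by (intro notI, simp)+
    have d: "distinct vs" unfolding vs_def using ne n1 n2 by simp
    have s: "set vs \<subseteq> HB_vertices n k x" unfolding vs_def HB_vertices_def
      using V1X1 V1X2 V2Y1 V2Y2 by auto
    have "\<forall>i<4. HB_adj n k x (vs ! i) (vs ! ((i + 1) mod 4))"
    proof (intro allI impI)
      fix i :: nat assume "i < 4"
      hence "i = 0 \<or> i = 1 \<or> i = 2 \<or> i = 3" by auto
      have A: "HB_adj n k x X1 Y1" "HB_adj n k x Y1 X2" "HB_adj n k x X2 Y2" "HB_adj n k x Y2 X1"
        unfolding HB_adj_def aY1 aY2
        subgoal by (rule disjI1) (intro conjI V1X1 V2Y1 disjI1 s1)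
        subgoal by (rule disjI2) (intro conjI V1X2 V2Y1 disjI1 s1)
        subgoal by (rule disjI1) (intro conjI V1X2 V2Y2 disjI2 s1)
        subgoal by (rule disjI2) (intro conjI V1X1 V2Y2 disjI2 s1)
        done
      from \<open>i = 0 \<or> i = 1 \<or> i = 2 \<or> i = 3\<close> show "HB_adj n k x (vs ! i) (vs ! ((i + 1) mod 4))"
      proof (elim disjE)
        assume "i = 0" thus ?thesis unfolding vs_def using A(1) by simp
      next
        assume "i = 1" thus ?thesis unfolding vs_def using A(2) by simp
      next
        assume "i = 2" thus ?thesis unfolding vs_def using A(3) by simp
      next
        assume "i = 3" thus ?thesis unfolding vs_def using A(4) by simp
      qed
    qed
    thus ?thesis using d s unfolding is_cycle_def vs_def by simp
  qed
  have l4: "length vs = 4" unfolding vs_def by simp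
  show ?thesis unfolding girth_def
  proof (rule antisym)
    show "(INF vs\<in>{vs. is_cycle (HB_vertices n k x) (HB_adj n k x) vs}. enat (length vs)) \<le> 4"
      using INF_lower[of vs "{vs. is_cycle (HB_vertices n k x) (HB_adj n k x) vs}" "\<lambda>vs. enat (length vs)"] cyc l4
      by (simp add: numeral_eq_enat)
    show "4 \<le> (INF vs\<in>{vs. is_cycle (HB_vertices n k x) (HB_adj n k x) vs}. enat (length vs))"
    proof (rule INF_greatest)
      fix ws assume "ws \<in> {vs. is_cycle (HB_vertices n k x) (HB_adj n k x) vs}"
      hence c: "is_cycle (HB_vertices n k x) (HB_adj n k x) ws" by simp
      hence "length ws \<ge> 3" unfolding is_cycle_def by simp
      moreover have "length ws \<noteq> 3" using no_len3[OF c] .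
      ultimately have "length ws \<ge> 4" by simp
      thus "4 \<le> enat (length ws)" by (simp add: numeral_eq_enat)
    qed
  qed
qed

end
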